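(* Let $\mathcal{A}$ be a weighted pushdown system with state set $Q$ and stack alphabet $\Gamma$, and let $\pi$ be a finite path of $\mathcal{A}$ with additional stack height $\mathrm{ASH}(\pi) = d \geq (|Q|\cdot|\Gamma|)^2$. Then $\pi$ has a pumpable pair of paths.
   Context: A stack command over a finite alphabet $\Gamma$ is one of $\mathit{skip}$ (no change), $\mathit{pop}$ (delete top symbol), $\mathit{push}(z)$ for $z\in\Gamma$ (put $z$ on top). A weighted pushdown system (WPS) is $\mathcal{A}=\langle Q,\Gamma,q_0,E,w\rangle$ with finite state set $Q$, initial state $q_0\in Q$, finite stack alphabet $\Gamma$ containing a special bottom symbol $\bot$ that can be neither pushed nor popped, edge set $E\subseteq (Q\times\Gamma)\times(Q\times\mathrm{Com}(\Gamma))$ and integer weights $w:E\to\mathbb{Z}$. A configuration is a pair $(\alpha,q)$ with $\alpha\in\Gamma^+$ a stack string (top is the last symbol) and $q\in Q$; the initial configuration is $(\bot,q_0)$. $(\alpha',q')$ is a successor of $(\alpha,q)$ if there is an edge $(q,\gamma,q',\mathit{com})\in E$ with $\gamma$ the top symbol of $\alpha$ and $\alpha'=\mathit{com}(\alpha)$. A path is a (finite or infinite) sequence of configurations each of which is a successor of the previous one; equivalently it is a start configuration followed by the sequence of edges used. The stack height $\mathrm{SH}(\pi)$ of a finite path $\pi=\langle(\alpha_1,q_1),\dots,(\alpha_n,q_n)\rangle$ is $\max_i|\alpha_i|$, and its additional stack height is $\mathrm{ASH}(\pi)=\mathrm{SH}(\pi)-\max\{|\alpha_1|,|\alpha_n|\}$.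 For a path $\pi=\langle c_1 e_1 e_2\dots\rangle$, a pumpable pair is a pair $(p_1,p_2)$ of nonempty blocks of consecutive edges $p_1=e_{i_1}\dots e_{i_1+n_1}$, $p_2=e_{i_2}\dots e_{i_2+n_2}$ with $i_2>i_1+n_1$, such that for every $j\geq 0$ the sequence obtained from $\pi$ by replacing $p_1$ by $p_1^j$ and $p_2$ by $p_2^j$ (denoted $\pi^j_{(p_1,p_2)}$) is again a valid path from $c_1$. *)

theory Defs
  imports Main
begin

datatype 'g com = Skip | Pop | Push 'g

text \<open>Stacks are lists; the top symbol is the LAST element of the list.\<close>
fun apply_com :: "'g com \<Rightarrow> 'g list \<Rightarrow> 'g list" where
  "apply_com Skip \<alpha> = \<alpha>"
| "apply_com Pop \<alpha> = butlast \<alpha>"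
| "apply_com (Push z) \<alpha> = \<alpha> @ [z]"

definition Com :: "'g set \<Rightarrow> 'g com set" where
  "Com \<Gamma> = {Skip, Pop} \<union> Push ` \<Gamma>"

type_synonym ('q, 'g) edge = "('q \<times> 'g) \<times> ('q \<times> 'g com)"
type_synonym ('q, 'g) config = "'g list \<times> 'q"

definition wps :: "'q set \<Rightarrow> 'g set \<Rightarrow> 'g \<Rightarrow> 'q \<Rightarrow> ('q, 'g) edge set \<Rightarrow> (('q, 'g) edge \<Rightarrow> int) \<Rightarrow> bool" where
  "wps Q \<Gamma> bt q0 E w \<longleftrightarrow>
     finite Q \<and> finite \<Gamma> \<and> q0 \<in> Q \<and> bt \<in> \<Gamma> \<and>
     E \<subseteq> (Q \<times> \<Gamma>) \<times> (Q \<times> Com \<Gamma>) \<and>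
     (\<forall>q q'. ((q, bt), (q', Pop)) \<notin> E) \<and>
     (\<forall>q \<gamma> q'. ((q, \<gamma>), (q', Push bt)) \<notin> E)"

fun step :: "('q, 'g) edge \<Rightarrow> ('q, 'g) config \<Rightarrow> ('q, 'g) config" where
  "step ((q, \<gamma>), (q', c)) (\<alpha>, p) = (apply_com c \<alpha>, q')"

definition is_config :: "'q set \<Rightarrow> 'g set \<Rightarrow> ('q, 'g) config \<Rightarrow> bool" where
  "is_config Q \<Gamma> c \<longleftrightarrow> fst c \<noteq> [] \<and> set (fst c) \<subseteq> \<Gamma> \<and> snd c \<in> Q"

definition enabled :: "'q set \<Rightarrow> 'g set \<Rightarrow> ('q, 'g) edge set \<Rightarrow> ('q, 'g) edge \<Rightarrow> ('q, 'g) config \<Rightarrow> bool" where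
  "enabled Q \<Gamma> E e c \<longleftrightarrow> e \<in> E \<and> fst (fst e) = snd c \<and> fst c \<noteq> [] \<and>
      snd (fst e) = last (fst c) \<and> is_config Q \<Gamma> (step e c)"

text \<open>A finite path: start configuration c followed by the list of edges used.\<close>
fun valid_path :: "'q set \<Rightarrow> 'g set \<Rightarrow> ('q, 'g) edge set \<Rightarrow> ('q, 'g) config \<Rightarrow> ('q, 'g) edge list \<Rightarrow> bool" where
  "valid_path Q \<Gamma> E c [] = is_config Q \<Gamma> c"
| "valid_path Q \<Gamma> E c (e # es) = (is_config Q \<Gamma> c \<and> enabled Q \<Gamma> E e c \<and> valid_path Q \<Gamma> E (step e c) es)"

fun configs :: "('q, 'g) config \<Rightarrow> ('q, 'g) edge list \<Rightarrow> ('q, 'g) config list" where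
  "configs c [] = [c]"
| "configs c (e # es) = c # configs (step e c) es"

definition SH :: "('q, 'g) config \<Rightarrow> ('q, 'g) edge list \<Rightarrow> nat" where
  "SH c es = Max (set (map (\<lambda>x. length (fst x)) (configs c es)))"

definition ASH :: "('q, 'g) config \<Rightarrow> ('q, 'g) edge list \<Rightarrow> nat" where
  "ASH c es = SH c es - max (length (fst (hd (configs c es)))) (length (fst (last (configs c es))))"

definition pumpable_pair :: "'q set \<Rightarrow> 'g set \<Rightarrow> ('q, 'g) edge set \<Rightarrow> ('q, 'g) config \<Rightarrow> ('q, 'g) edge list
    \<Rightarrow> ('q, 'g) edge list \<Rightarrow> ('q, 'g) edge list \<Rightarrow> bool" where
  "pumpable_pair Q \<Gamma> E c es p1 p2 \<longleftrightarrow> p1 \<noteq> [] \<and> p2 \<noteq> [] \<and>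
     (\<exists>u v x. es = u @ p1 @ v @ p2 @ x \<and>
        (\<forall>j::nat. valid_path Q \<Gamma> E c (u @ concat (replicate j p1) @ v @ concat (replicate j p2) @ x)))"

end

theory Submission imports Defs begin

lemma valid_is_config: "valid_path Q \<Gamma> E c ys \<Longrightarrow> is_config Q \<Gamma> c"
  by (cases ys) auto

lemma valid_append: "valid_path Q \<Gamma> E c (xs @ ys) =
   (valid_path Q \<Gamma> E c xs \<and> valid_path Q \<Gamma> E (fold step xs c) ys)"
  by (induction xs arbitrary: c) (auto dest: valid_is_config)

lemma length_configs[simp]: "length (configs c xs) = Suc (length xs)"
  by (induction xs arbitrary: c) auto

lemma configs_nth: "l \<le> length xs \<Longrightarrow> configs c xs ! l = fold step (take l xs) c"
proof (induction xs arbitrary: c l)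
  case Nil then show ?case by simp
next
  case (Cons e xs) then show ?case by (cases l) auto
qed

lemma set_configs: "x \<in> set (configs c xs) \<Longrightarrow> \<exists>l\<le>length xs. x = fold step (take l xs) c"
  by (auto simp: in_set_conv_nth configs_nth less_Suc_eq_le)

lemma set_configs2: "l \<le> length xs \<Longrightarrow> fold step (take l xs) c \<in> set (configs c xs)"
  by (metis configs_nth length_configs less_Suc_eq_le nth_mem)

lemma valid_configs: "valid_path Q \<Gamma> E c xs \<Longrightarrow> x \<in> set (configs c xs) \<Longrightarrow> is_config Q \<Gamma> x"
  by (induction xs arbitrary: c) auto

lemma step_app: "r \<noteq> [] \<Longrightarrow> step e (pre @ r, q) = (pre @ fst (step e (r, q)), snd (step e (r, q)))"
  by (cases e; cases "snd (snd e)") (auto simp: butlast_append)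

lemma step_snd: "snd (step e (x, q)) = snd (step e (y, q'))"
  by (cases e) auto

lemma step_len: "length (fst (step e x)) \<le> Suc (length (fst x)) \<and> length (fst x) \<le> Suc (length (fst (step e x)))"
  by (cases e; cases x; cases "snd (snd e)") auto

lemma replay:
  assumes "valid_path Q \<Gamma> E (pre @ r, q) es"
    "\<forall>x\<in>set (configs (pre @ r, q) es). length pre < length (fst x)"
    "set pre' \<subseteq> \<Gamma>"
  shows "valid_path Q \<Gamma> E (pre' @ r, q) es \<and>
     (\<exists>r'. fst (fold step es (pre @ r, q)) = pre @ r' \<and>
        fold step es (pre' @ r, q) = (pre' @ r', snd (fold step es (pre @ r, q))))"
  using assms
proof (induction es arbitrary: r q)
  case Nil
  then show ?case by (auto simp: is_config_def)
next
  case (Cons e es)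
  from Cons.prems have rne: "r \<noteq> []" by auto
  define r1 where "r1 = fst (step e (r, q))"
  define q1 where "q1 = snd (step e (r, q))"
  have st: "step e (pre @ r, q) = (pre @ r1, q1)" using step_app[OF rne] r1_def q1_def by simp
  have st': "step e (pre' @ r, q) = (pre' @ r1, q1)" using step_app[OF rne] r1_def q1_def by simp
  have v1: "valid_path Q \<Gamma> E (pre @ r1, q1) es" and en: "enabled Q \<Gamma> E e (pre @ r, q)"
    and ic: "is_config Q \<Gamma> (pre @ r, q)"
    using Cons.prems st by auto
  have c1: "\<forall>x\<in>set (configs (pre @ r1, q1) es). length pre < length (fst x)"
    using Cons.prems st by auto
  then have r1ne: "r1 \<noteq> []" by (cases es) auto
  have ic1: "is_config Q \<Gamma> (pre @ r1, q1)" using en st by (simp add: enabled_def)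
  note IH = Cons.IH[OF v1 c1 Cons.prems(3)]
  have "is_config Q \<Gamma> (pre' @ r, q)" using ic rne Cons.prems(3) by (auto simp: is_config_def)
  moreover have "enabled Q \<Gamma> E e (pre' @ r, q)"
    using en rne r1ne ic1 Cons.prems(3) st' by (auto simp: enabled_def is_config_def)
  ultimately show ?case using IH st st' by auto
qed

lemma iter_up:
  assumes "\<And>P. set P \<subseteq> \<Gamma> \<Longrightarrow> valid_path Q \<Gamma> E (P @ X, q) p \<and> fold step p (P @ X, q) = (P @ B @ X, q)"
    "set B \<subseteq> \<Gamma>" "set P \<subseteq> \<Gamma>"
  shows "valid_path Q \<Gamma> E (P @ X, q) (concat (replicate j p)) \<and>
     fold step (concat (replicate j p)) (P @ X, q) = (P @ concat (replicate j B) @ X, q)"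
  using assms(3)
proof (induction j arbitrary: P)
  case 0
  then show ?case using assms(1)[OF 0] valid_is_config by auto
next
  case (Suc j)
  have "set (P @ B) \<subseteq> \<Gamma>" using Suc.prems assms(2) by auto
  note IH = Suc.IH[OF this]
  show ?case using assms(1)[OF Suc.prems] IH by (auto simp: valid_append)
qed

lemma concat_rep_Suc: "concat (replicate (Suc j) B) = concat (replicate j B) @ B"
  by (induction j) auto

lemma iter_down:
  assumes "\<And>P. set P \<subseteq> \<Gamma> \<Longrightarrow> valid_path Q \<Gamma> E (P @ B @ Y, q) p \<and> fold step p (P @ B @ Y, q) = (P @ Y, q)"
    "set B \<subseteq> \<Gamma>" "set P \<subseteq> \<Gamma>" "is_config Q \<Gamma> (P @ Y, q)"
  shows "valid_path Q \<Gamma> E (P @ concat (replicate j B) @ Y, q) (concat (replicate j p)) \<and>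
     fold step (concat (replicate j p)) (P @ concat (replicate j B) @ Y, q) = (P @ Y, q)"
proof (induction j)
  case 0
  then show ?case using assms(4) by auto
next
  case (Suc j)
  have sP: "set (P @ concat (replicate j B)) \<subseteq> \<Gamma>" using assms(2,3) by auto
  have eq: "P @ concat (replicate (Suc j) B) @ Y = (P @ concat (replicate j B)) @ B @ Y"
    by (simp only: concat_rep_Suc append_assoc)
  have eq2: "concat (replicate (Suc j) p) = p @ concat (replicate j p)" by simp
  from assms(1)[OF sP] show ?case using Suc.IH
    unfolding eq eq2 by (auto simp: valid_append)
qed

lemma single_last: "length r = 1 \<Longrightarrow> r = [last r]"
  by (cases r) auto

theorem lemma1:
  fixes Q :: "'q set" and \<Gamma> :: "'g set" and bt :: 'g and q0 :: 'q
    and E :: "('q, 'g) edge set" and w :: "('q, 'g) edge \<Rightarrow> int"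
    and c :: "('q, 'g) config" and es :: "('q, 'g) edge list" and d :: nat
  assumes "wps Q \<Gamma> bt q0 E w"
    and "valid_path Q \<Gamma> E c es"
    and "ASH c es = d"
    and "d \<ge> (card Q * card \<Gamma>)^2"
  shows "\<exists>p1 p2. pumpable_pair Q \<Gamma> E c es p1 p2"
proof -
  note W = assms(1)[unfolded wps_def]
  have val: "valid_path Q \<Gamma> E c es" by fact
  define n where "n = length es"
  define cf where "cf i = fold step (take i es) c" for i
  define h where "h i = length (fst (cf i))" for i
  define N where "N = card Q * card \<Gamma>"
  have N1: "N \<ge> 1" using W by (simp add: N_def Suc_le_eq card_gt_0_iff) (auto)
  have cfin: "cf i \<in> set (configs c es)" if "i \<le> n" for i
    using set_configs2[of i es c] that by (simp add: cf_def n_def)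
  have cfconf: "is_config Q \<Gamma> (cf i)" if "i \<le> n" for i
    using valid_configs[OF val cfin[OF that]] .
  have cfstep: "cf (Suc i) = step (es ! i) (cf i)" if "i < n" for i
    using that by (simp add: cf_def n_def take_Suc_conv_app_nth)
  have hstep: "h (Suc i) \<le> Suc (h i) \<and> h i \<le> Suc (h (Suc i))" if "i < n" for i
    using step_len[of "es ! i" "cf i"] cfstep[OF that] by (simp add: h_def)
  have cf0: "cf 0 = c" by (simp add: cf_def)
  have cfn: "cf n = fold step es c" by (simp add: cf_def n_def)
  have hd: "hd (configs c es) = c" by (cases es) auto
  have cne: "configs c es \<noteq> []" by (cases es) auto
  have lst: "last (configs c es) = cf n"
    using configs_nth[of "length es" es c] cne by (simp add: last_conv_nth cf_def n_def)
  define H where "H = SH c es"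
  define m where "m = max (h 0) (h n)"
  have dH: "d = H - m" using assms(3) by (simp add: ASH_def H_def m_def hd lst h_def cf0)
  have SHset: "SH c es = Max ((\<lambda>x. length (fst x)) ` set (configs c es))"
    by (simp add: SH_def)
  obtain t where t: "t \<le> n" "h t = H"
  proof -
    have "H \<in> (\<lambda>x. length (fst x)) ` set (configs c es)"
      unfolding H_def SHset using cne by (intro Max_in) auto
    then obtain x where "x \<in> set (configs c es)" "H = length (fst x)" by auto
    with set_configs[OF this(1)] show ?thesis using that by (auto simp: h_def cf_def n_def)
  qed
  have hle: "h i \<le> H" if "i \<le> n" for i
    unfolding H_def SHset h_def using cfin[OF that] by (intro Max_ge) auto
  have "N^2 \<ge> 1" using N1 by simp
  then have d1: "d \<ge> 1" using assms(4) unfolding N_def by linarith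
  have mH: "m < H" using dH d1 by linarith
  have h0m: "h 0 \<le> m" and hnm: "h n \<le> m" by (auto simp: m_def)
  have take_split: "take j es = take i es @ drop i (take j es)" if "i \<le> j" for i j
    using that by (metis append_take_drop_id min.absorb1 take_take)
  have segfold: "fold step (drop i (take j es)) (cf i) = cf j" if "i \<le> j" for i j
    using take_split[OF that] by (simp add: cf_def) (metis fold_append comp_apply)
  have segval: "valid_path Q \<Gamma> E (cf i) (drop i (take j es))" if "i \<le> j" for i j
  proof -
    have "valid_path Q \<Gamma> E c (take j es)"
      using val valid_append[of Q \<Gamma> E c "take j es" "drop j es"] by simp
    then show ?thesis using take_split[OF that] valid_append by (metis cf_def)
  qed
  have segcfg: "\<exists>l. i \<le> l \<and> l \<le> j \<and> x = cf l"
    if sa: "i \<le> j" "j \<le> n" "x \<in> set (configs (cf i) (drop i (take j es)))" for i j x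
  proof -
    obtain l where l: "l \<le> length (drop i (take j es))" "x = fold step (take l (drop i (take j es))) (cf i)"
      using set_configs[OF sa(3)] by auto
    have ll: "i + l \<le> j" using l(1) sa by (simp add: n_def)
    have "take l (drop i (take j es)) = take l (drop i es)"
      using ll by (simp add: drop_take take_take min_def)
    moreover have "take (i + l) es = take i es @ take l (drop i es)" by (simp add: take_add)
    ultimately have "x = cf (i + l)" using l(2) by (simp add: cf_def)
    then show ?thesis using ll by (intro exI[of _ "i + l"]) auto
  qed
  define al where "al k = Max {i. i \<le> t \<and> h i \<le> k}" for k
  define bl where "bl k = Min {i. t \<le> i \<and> i \<le> n \<and> h i \<le> k}" for k
  have alp: "al k \<le> t \<and> h (al k) = k \<and> (\<forall>i. al k < i \<longrightarrow> i \<le> t \<longrightarrow> k < h i)"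
    if "m \<le> k" "k \<le> H" for k
  proof -
    let ?S = "{i. i \<le> t \<and> h i \<le> k}"
    have fin: "finite ?S" by (rule finite_subset[of _ "{..t}"]) auto
    have ne: "0 \<in> ?S" using h0m that by auto
    have inS: "al k \<in> ?S" unfolding al_def using fin ne by (intro Max_in) auto
    have mx: "i \<le> al k" if "i \<in> ?S" for i unfolding al_def using fin that by (rule Max_ge)
    have gt: "\<forall>i. al k < i \<longrightarrow> i \<le> t \<longrightarrow> k < h i" using mx by force
    have "h (al k) \<ge> k"
    proof (cases "al k = t")
      case True then show ?thesis using t that by simp
    next
      case False
      then have "al k < t" using inS by simp
      then have "k < h (Suc (al k))" using gt by auto
      moreover have "h (Suc (al k)) \<le> Suc (h (al k))" using hstep[of "al k"] \<open>al k < t\<close> t by simp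
      ultimately show ?thesis by simp
    qed
    then show ?thesis using inS gt by auto
  qed
  have alm: "al k \<le> al k'" if "m \<le> k" "k \<le> k'" "k' \<le> H" for k k'
  proof -
    let ?S = "{i. i \<le> t \<and> h i \<le> k'}"
    have fin: "finite ?S" by (rule finite_subset[of _ "{..t}"]) auto
    have "al k \<in> ?S" using alp[of k] that by auto
    then show ?thesis unfolding al_def[of k'] using fin by (rule Max_ge[rotated])
  qed
  have blp: "t \<le> bl k \<and> bl k \<le> n \<and> h (bl k) = k \<and> (\<forall>i. t \<le> i \<longrightarrow> i < bl k \<longrightarrow> k < h i)"
    if "m \<le> k" "k \<le> H" for k
  proof -
    let ?S = "{i. t \<le> i \<and> i \<le> n \<and> h i \<le> k}"
    have fin: "finite ?S" by (rule finite_subset[of _ "{..n}"]) auto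
    have ne: "n \<in> ?S" using hnm that t by auto
    have inS: "bl k \<in> ?S" unfolding bl_def using fin ne by (intro Min_in) auto
    have mn: "bl k \<le> i" if "i \<in> ?S" for i unfolding bl_def using fin that by (rule Min_le)
    have gt: "\<forall>i. t \<le> i \<longrightarrow> i < bl k \<longrightarrow> k < h i"
    proof (intro allI impI)
      fix i assume "t \<le> i" "i < bl k"
      moreover have "bl k \<le> n" using inS by simp
      ultimately show "k < h i" using mn[of i] by force
    qed
    have "h (bl k) \<ge> k"
    proof (cases "bl k = t")
      case True then show ?thesis using t that by simp
    next
      case False
      then have tb: "t < bl k" using inS by simp
      then have "k < h (bl k - 1)" using gt by auto
      moreover have "h (Suc (bl k - 1)) \<le> Suc (h (bl k - 1)) \<and> h (bl k - 1) \<le> Suc (h (Suc (bl k - 1)))"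
      proof -
        have "bl k - 1 < n" using tb inS by auto
        from hstep[OF this] show ?thesis .
      qed
      moreover have "Suc (bl k - 1) = bl k" using tb by simp
      ultimately show ?thesis by simp
    qed
    then show ?thesis using inS gt by auto
  qed
  have blm: "bl k' \<le> bl k" if "m \<le> k" "k \<le> k'" "k' \<le> H" for k k'
  proof -
    let ?S = "{i. t \<le> i \<and> i \<le> n \<and> h i \<le> k'}"
    have fin: "finite ?S" by (rule finite_subset[of _ "{..n}"]) auto
    have "bl k \<in> ?S" using blp[of k] that by auto
    then show ?thesis unfolding bl_def[of k'] using fin by (rule Min_le[rotated])
  qed
  have between: "k \<le> h i" if "m \<le> k" "k \<le> H" "al k \<le> i" "i \<le> bl k" for k i
  proof (cases "i \<le> t")
    case True
    have A: "al k \<le> t \<and> h (al k) = k \<and> (\<forall>i. al k < i \<longrightarrow> i \<le> t \<longrightarrow> k < h i)" using alp[OF that(1,2)] .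
    show ?thesis
    proof (cases "al k = i")
      case True then show ?thesis using A by simp
    next
      case False
      then have "al k < i" using that(3) by simp
      then show ?thesis using A \<open>i \<le> t\<close> by (meson less_imp_le)
    qed
  next
    case False
    have B: "t \<le> bl k \<and> bl k \<le> n \<and> h (bl k) = k \<and> (\<forall>i. t \<le> i \<longrightarrow> i < bl k \<longrightarrow> k < h i)" using blp[OF that(1,2)] .
    show ?thesis
    proof (cases "bl k = i")
      case True then show ?thesis using B by simp
    next
      case False
      then have "i < bl k" using that(4) by simp
      moreover have "t \<le> i" using \<open>\<not> i \<le> t\<close> by simp
      ultimately show ?thesis using B by (meson less_imp_le)
    qed
  qed
  have seg: "(\<forall>P. set P \<subseteq> \<Gamma> \<longrightarrow> valid_path Q \<Gamma> E (P @ r, snd (cf i)) (drop i (take j es)) \<and>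
      fold step (drop i (take j es)) (P @ r, snd (cf i)) = (P @ drop (length pre) (fst (cf j)), snd (cf j)))
      \<and> fst (cf j) = pre @ drop (length pre) (fst (cf j))"
    if sg: "i \<le> j" "j \<le> n" "fst (cf i) = pre @ r" "\<forall>l. i \<le> l \<longrightarrow> l \<le> j \<longrightarrow> length pre < h l" for i j pre r
  proof -
    have ci: "cf i = (pre @ r, snd (cf i))" using sg(3) by (metis prod.collapse)
    have v: "valid_path Q \<Gamma> E (pre @ r, snd (cf i)) (drop i (take j es))"
      using segval[OF sg(1)] ci by simp
    have cc: "\<forall>x\<in>set (configs (pre @ r, snd (cf i)) (drop i (take j es))). length pre < length (fst x)"
    proof
      fix x assume "x \<in> set (configs (pre @ r, snd (cf i)) (drop i (take j es)))"
      then obtain l where "i \<le> l" "l \<le> j" "x = cf l" using segcfg[OF sg(1,2)] ci by metis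
      then show "length pre < length (fst x)" using sg(4) by (simp add: h_def)
    qed
    have fj: "fold step (drop i (take j es)) (pre @ r, snd (cf i)) = cf j" using segfold[OF sg(1)] ci by simp
    have A: "\<forall>P. set P \<subseteq> \<Gamma> \<longrightarrow> valid_path Q \<Gamma> E (P @ r, snd (cf i)) (drop i (take j es)) \<and>
      (\<exists>r'. fst (cf j) = pre @ r' \<and> fold step (drop i (take j es)) (P @ r, snd (cf i)) = (P @ r', snd (cf j)))"
      using replay[OF v cc] fj by metis
    have "is_config Q \<Gamma> (cf i)" using cfconf sg by simp
    then have "set pre \<subseteq> \<Gamma>" using sg(3) by (simp add: is_config_def)
    then obtain r' where "fst (cf j) = pre @ r'" using A by blast
    then have r': "r' = drop (length pre) (fst (cf j))" by simp
    show ?thesis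
    proof (rule conjI, intro allI impI)
      fix P :: "'g list" assume "set P \<subseteq> \<Gamma>"
      with A obtain r'' where "valid_path Q \<Gamma> E (P @ r, snd (cf i)) (drop i (take j es))"
        "fst (cf j) = pre @ r''" "fold step (drop i (take j es)) (P @ r, snd (cf i)) = (P @ r'', snd (cf j))"
        by blast
      then show "valid_path Q \<Gamma> E (P @ r, snd (cf i)) (drop i (take j es)) \<and>
        fold step (drop i (take j es)) (P @ r, snd (cf i)) = (P @ drop (length pre) (fst (cf j)), snd (cf j))"
        by simp
    next
      show "fst (cf j) = pre @ drop (length pre) (fst (cf j))" using \<open>fst (cf j) = pre @ r'\<close> by simp
    qed
  qed
  define f where "f k = ((snd (cf (al k)), last (fst (cf (al k)))), (snd (cf (bl k)), last (fst (cf (bl k)))))" for k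
  have lastin: "last (fst (cf i)) \<in> \<Gamma> \<and> snd (cf i) \<in> Q" if "i \<le> n" for i
    using cfconf[OF that] by (auto simp: is_config_def)
  have fimg: "f ` {m..H} \<subseteq> (Q \<times> \<Gamma>) \<times> (Q \<times> \<Gamma>)"
  proof
    fix y assume "y \<in> f ` {m..H}"
    then obtain k where k: "m \<le> k" "k \<le> H" "y = f k" by auto
    have "al k \<le> n" "bl k \<le> n" using alp[OF k(1,2)] blp[OF k(1,2)] t by auto
    then show "y \<in> (Q \<times> \<Gamma>) \<times> (Q \<times> \<Gamma>)" using lastin k(3) by (simp add: f_def)
  qed
  have "\<not> inj_on f {m..H}"
  proof
    assume "inj_on f {m..H}"
    then have "card {m..H} \<le> card ((Q \<times> \<Gamma>) \<times> (Q \<times> \<Gamma>))"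
      using fimg W by (intro card_inj_on_le) auto
    also have "\<dots> = N^2" by (simp add: card_cartesian_product N_def power2_eq_square)
    finally show False using dH assms(4) mH unfolding N_def by simp
  qed
  then obtain k k' where kk: "m \<le> k" "k < k'" "k' \<le> H" "f k = f k'"
    unfolding inj_on_def by (metis atLeastAtMost_iff linorder_neqE_nat)
  define a where "a = al k"
  define a' where "a' = al k'"
  define b where "b = bl k"
  define b' where "b' = bl k'"
  have k1: "m \<le> k" "k \<le> H" and k2: "m \<le> k'" "k' \<le> H" using kk by auto
  note A1 = alp[OF k1] and A2 = alp[OF k2] and B1 = blp[OF k1] and B2 = blp[OF k2]
  have ha: "h a = k" "h a' = k'" "h b = k" "h b' = k'" using A1 A2 B1 B2 by (auto simp: a_def a'_def b_def b'_def)
  have aa: "a < a'" using alm[of k k'] kk ha by (auto simp: a_def a'_def order_le_less)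
  have bb: "b' < b" using blm[of k k'] kk ha by (auto simp: b_def b'_def order_le_less)
  have ab: "a' \<le> b'" "b \<le> n" using A2 B2 B1 by (auto simp: a'_def b'_def b_def)
  have bw1: "\<forall>l. a \<le> l \<longrightarrow> l \<le> b \<longrightarrow> k \<le> h l" using between[OF k1] by (simp add: a_def b_def)
  have bw2: "\<forall>l. a' \<le> l \<longrightarrow> l \<le> b' \<longrightarrow> k' \<le> h l" using between[OF k2] by (simp add: a'_def b'_def)
  define s where "s = fst (cf a)"
  define pre where "pre = butlast s"
  define g where "g = last s"
  define q1 where "q1 = snd (cf a)"
  define q2 where "q2 = snd (cf b)"
  define g2 where "g2 = last (fst (cf b))"
  have confa: "is_config Q \<Gamma> (cf a)" using cfconf aa ab bb by simp
  have sne: "s \<noteq> []" using confa by (simp add: s_def is_config_def)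
  have s_eq: "s = pre @ [g]" using sne by (simp add: pre_def g_def)
  have lpre: "length pre = k - 1" "k \<ge> 1" using ha(1) sne by (auto simp: h_def s_def pre_def Suc_le_eq)
  have fe: "snd (cf a') = q1" "last (fst (cf a')) = g" "snd (cf b') = q2" "last (fst (cf b')) = g2"
    using kk(4) by (auto simp: f_def a_def a'_def b_def b'_def q1_def q2_def g_def s_def g2_def)
  define p1 where "p1 = drop a (take a' es)"
  define R1 where "R1 = drop (length pre) (fst (cf a'))"
  have S1: "(\<forall>P. set P \<subseteq> \<Gamma> \<longrightarrow> valid_path Q \<Gamma> E (P @ [g], q1) p1 \<and>
      fold step p1 (P @ [g], q1) = (P @ R1, q1)) \<and> fst (cf a') = pre @ R1"
    using seg[of a a' pre "[g]"] aa ab bb bw1 lpre fe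
    unfolding p1_def R1_def q1_def s_eq[symmetric] s_def by fastforce
  have lR1: "length R1 = k' - k + 1" using S1 ha(2) lpre kk(2) by (simp add: h_def R1_def)
  define BB where "BB = butlast R1"
  have R1ne: "R1 \<noteq> []" using lR1 by auto
  have "last R1 = g" using R1ne fe(2) S1 by simp
  then have R1eq: "R1 = BB @ [g]" using R1ne unfolding BB_def by (metis append_butlast_last_id)
  have confa': "is_config Q \<Gamma> (cf a')" using cfconf aa ab bb by simp
  have setB: "set pre \<subseteq> \<Gamma>" "set BB \<subseteq> \<Gamma>" using confa' S1 R1eq by (auto simp: is_config_def)
  define v where "v = drop a' (take b' es)"
  define Rv where "Rv = drop (length (pre @ BB)) (fst (cf b'))"
  have lpv: "length (pre @ BB) = k' - 1" using lpre lR1 R1eq kk(2) by simp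
  have Sv: "(\<forall>P. set P \<subseteq> \<Gamma> \<longrightarrow> valid_path Q \<Gamma> E (P @ [g], q1) v \<and>
      fold step v (P @ [g], q1) = (P @ Rv, q2)) \<and> fst (cf b') = (pre @ BB) @ Rv"
    using seg[of a' b' "pre @ BB" "[g]"] aa ab bb bw2 lpv fe S1 R1eq kk(2) lpre
    unfolding v_def Rv_def by fastforce
  have lRv: "length Rv = 1" using Sv ha(4) lpv lpre kk(2) by (simp add: h_def Rv_def)
  have Rveq: "Rv = [g2]" using single_last[OF lRv] fe(4) Sv lRv by (metis append_assoc last_appendR list.size(3) zero_neq_one)
  define p2 where "p2 = drop b' (take b es)"
  define R2 where "R2 = drop (length pre) (fst (cf b))"
  have S2: "(\<forall>P. set P \<subseteq> \<Gamma> \<longrightarrow> valid_path Q \<Gamma> E (P @ BB @ [g2], q2) p2 \<and>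
      fold step p2 (P @ BB @ [g2], q2) = (P @ R2, q2)) \<and> fst (cf b) = pre @ R2"
  proof -
    have "\<forall>l. b' \<le> l \<longrightarrow> l \<le> b \<longrightarrow> length pre < h l"
    proof (intro allI impI)
      fix l assume "b' \<le> l" "l \<le> b"
      then have "k \<le> h l" using bw1 aa ab by auto
      then show "length pre < h l" using lpre by linarith
    qed
    then show ?thesis
      using seg[of b' b pre "BB @ [g2]"] bb ab Sv Rveq fe(3)
      unfolding p2_def R2_def q2_def by fastforce
  qed
  have lR2: "length R2 = 1" using S2 ha(3) lpre by (simp add: h_def R2_def)
  have R2eq: "R2 = [g2]" using single_last[OF lR2] S2 lR2 g2_def
    by (metis last_appendR list.size(3) zero_neq_one)
  have SvP: "valid_path Q \<Gamma> E (P @ [g], q1) v \<and> fold step v (P @ [g], q1) = (P @ [g2], q2)"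
    if "set P \<subseteq> \<Gamma>" for P using Sv that unfolding Rveq by blast
  have confb: "is_config Q \<Gamma> (cf b)" using cfconf ab by simp
  have cfb: "cf b = (pre @ [g2], q2)" using S2 R2eq q2_def by (metis prod.collapse)
  have cfa: "cf a = (pre @ [g], q1)" using s_eq s_def q1_def by (metis prod.collapse)
  have p1ne: "p1 \<noteq> []" using aa ab bb by (simp add: p1_def n_def)
  have p2ne: "p2 \<noteq> []" using aa ab bb by (simp add: p2_def n_def)
  have dec: "es = take a es @ p1 @ v @ p2 @ drop b es"
  proof -
    have "take b es = take b' es @ p2" using take_split[of b' b] bb by (simp add: p2_def)
    moreover have "take b' es = take a' es @ v" using take_split[of a' b'] ab by (simp add: v_def)
    moreover have "take a' es = take a es @ p1" using take_split[of a a'] aa by (simp add: p1_def)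
    ultimately show ?thesis by (metis append_assoc append_take_drop_id)
  qed
  have vu: "valid_path Q \<Gamma> E c (take a es)" "fold step (take a es) c = cf a"
    using val valid_append[of Q \<Gamma> E c "take a es" "drop a es"] by (auto simp: cf_def)
  have vx: "valid_path Q \<Gamma> E (cf b) (drop b es)"
    using val valid_append[of Q \<Gamma> E c "take b es" "drop b es"] by (auto simp: cf_def)
  have pump: "valid_path Q \<Gamma> E c (take a es @ concat (replicate j p1) @ v @ concat (replicate j p2) @ drop b es)" for j
  proof -
    have I1: "valid_path Q \<Gamma> E (pre @ [g], q1) (concat (replicate j p1)) \<and>
       fold step (concat (replicate j p1)) (pre @ [g], q1) = (pre @ concat (replicate j BB) @ [g], q1)"
      using S1 R1eq setB by (intro iter_up) auto
    have sP: "set (pre @ concat (replicate j BB)) \<subseteq> \<Gamma>" using setB by auto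
    have Iv: "valid_path Q \<Gamma> E ((pre @ concat (replicate j BB)) @ [g], q1) v \<and>
       fold step v ((pre @ concat (replicate j BB)) @ [g], q1) = ((pre @ concat (replicate j BB)) @ [g2], q2)"
      using SvP[OF sP] .
    have I2: "valid_path Q \<Gamma> E (pre @ concat (replicate j BB) @ [g2], q2) (concat (replicate j p2)) \<and>
       fold step (concat (replicate j p2)) (pre @ concat (replicate j BB) @ [g2], q2) = (pre @ [g2], q2)"
      using S2 R2eq setB confb cfb by (intro iter_down) auto
    show ?thesis using vu I1 Iv I2 vx cfa cfb by (simp add: valid_append)
  qed
  show ?thesis unfolding pumpable_pair_def using p1ne p2ne dec pump by blast
qed
end
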